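(* Let $3\le m\le n$ and $r=m-1$. Then $\mathrm{Hrk}^\circ_{m-1}(m,n)=\mathrm{Hrk}^{\max}_{m-1}(m,n)=2$.
   Context: Work over $\mathbb{C}$. $A\star B$ denotes the entrywise (Hadamard) product of matrices, and for projective varieties $X,Y\subset\mathbb{P}^N$, $X\star Y$ is the Zariski closure of the set of entrywise products $p\star q$ ($p\in X,q\in Y$, $p\star q$ not the zero vector); $X^{\star1}=X$, $X^{\star s}=X\star X^{\star(s-1)}$. $X_r\subset\mathbb{P}(\mathrm{Mat}_{m,n})$ is the variety of $m\times n$ matrices of rank at most $r$. For a matrix $M$, $\mathrm{Hrk}_r(M)=\min\{s\mid M=A_1\star\cdots\star A_s,\ \mathrm{rk}(A_i)\le r\}$. $\mathrm{Hrk}_r^\circ(m,n)=\min\{s\mid X_r^{\star s}=\mathbb{P}(\mathrm{Mat}_{m,n})\}$ and $\mathrm{Hrk}_r^{\max}(m,n)=\max\{\mathrm{Hrk}_r(M)\mid M\in\mathrm{Mat}_{m,n}\}$. *)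

theory Defs
  imports "HOL-Analysis.Analysis"
begin

text \<open>Matrices of size m x n over the complex numbers are modelled as
  complex^'n^'m, with m = CARD('m), n = CARD('n).  Projective varieties in
  P(Mat_{m,n}) are represented by their affine cones in Mat_{m,n}.\<close>

definition hadamard :: "complex^'n^'m \<Rightarrow> complex^'n^'m \<Rightarrow> complex^'n^'m" (infixl "\<star>" 70)
  where "A \<star> B = (\<chi> i j. A $ i $ j * B $ i $ j)"

inductive_set polyfun :: "(complex^'n^'m \<Rightarrow> complex) set" where
  const: "(\<lambda>_. c) \<in> polyfun"
| coord: "(\<lambda>A. A $ i $ j) \<in> polyfun"
| add: "f \<in> polyfun \<Longrightarrow> g \<in> polyfun \<Longrightarrow> (\<lambda>A. f A + g A) \<in> polyfun"
| mult: "f \<in> polyfun \<Longrightarrow> g \<in> polyfun \<Longrightarrow> (\<lambda>A. f A * g A) \<in> polyfun"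

definition zariski_closure :: "(complex^'n^'m) set \<Rightarrow> (complex^'n^'m) set" where
  "zariski_closure S = {A. \<forall>f\<in>polyfun. (\<forall>B\<in>S. f B = 0) \<longrightarrow> f A = 0}"

definition hstar :: "(complex^'n^'m) set \<Rightarrow> (complex^'n^'m) set \<Rightarrow> (complex^'n^'m) set" where
  "hstar X Y = zariski_closure {A \<star> B | A B. A \<in> X \<and> B \<in> Y}"

definition Xr :: "nat \<Rightarrow> (complex^'n^'m) set" where
  "Xr r = {A. rank A \<le> r}"

fun hpow :: "nat \<Rightarrow> nat \<Rightarrow> (complex^'n^'m) set" where
  "hpow r 0 = Xr r"
| "hpow r (Suc 0) = Xr r"
| "hpow r (Suc (Suc s)) = hstar (Xr r) (hpow r (Suc s))"

definition Hrk :: "nat \<Rightarrow> complex^'n^'m \<Rightarrow> nat" where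
  "Hrk r M = (LEAST s. \<exists>As. As \<noteq> [] \<and> length As = s \<and> (\<forall>A\<in>set As. rank A \<le> r)
                  \<and> M = foldr (\<star>) (butlast As) (last As))"

definition Hrk_generic :: "nat \<Rightarrow> 'n::finite itself \<Rightarrow> 'm::finite itself \<Rightarrow> nat" where
  "Hrk_generic r _ _ = (LEAST s. s \<ge> 1 \<and> hpow r s = (UNIV :: (complex^'n^'m) set))"

definition Hrk_max :: "nat \<Rightarrow> 'n::finite itself \<Rightarrow> 'm::finite itself \<Rightarrow> nat" where
  "Hrk_max r _ _ = Max (range (Hrk r :: complex^'n^'m \<Rightarrow> nat))"

end

theory Submission imports Defs begin

lemma quad_root:
  fixes x p y :: complex assumes "x \<noteq> 0"
  shows "\<exists>t. x*t^2 + p*t + y = 0"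
proof -
  define s where "s = csqrt (p^2 - 4*x*y)"
  have s2: "s^2 = p^2 - 4*x*y" by (simp add: s_def)
  define t where "t = (-p + s)/(2*x)"
  have "x*t^2 + p*t + y = ((s^2 - p^2) + 4*x*y)/(4*x)"
    using assms unfolding t_def by (simp add: field_simps power2_eq_square)
  also have "\<dots> = 0" using s2 by simp
  finally show ?thesis by blast
qed

lemma col:
  fixes x y z :: complex
  shows "\<exists>a1 a2 b1 b2. a1*b1 = x \<and> a2*b2 = y \<and> (a1+a2)*(b1+b2) = z"
proof (cases "x = 0")
  case True
  show ?thesis
  proof (cases "y = 0")
    case True
    with \<open>x = 0\<close> show ?thesis by (intro exI[of _ 1] exI[of _ 0] exI[of _ 0] exI[of _ z]) simp
  next
    case False
    with \<open>x = 0\<close> show ?thesis by (intro exI[of _ 0] exI[of _ 1] exI[of _ "z - y"] exI[of _ y]) simp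
  qed
next
  case xne: False
  show ?thesis
  proof (cases "y = 0")
    case True
    then show ?thesis by (intro exI[of _ 1] exI[of _ 0] exI[of _ x] exI[of _ "z - x"]) simp
  next
    case yne: False
    obtain t where t: "x*t^2 + (x+y-z)*t + y = 0" using quad_root[OF xne] by blast
    have tne: "t \<noteq> 0" using t yne by auto
    have "(1+t)*(x + y/t) = z"
    proof -
      have "(1+t)*(x + y/t) * t = z * t" using t tne
        by (simp add: field_simps power2_eq_square)
      then show ?thesis using tne by simp
    qed
    then show ?thesis using tne by (intro exI[of _ 1] exI[of _ t] exI[of _ x] exI[of _ "y/t"]) simp
  qed
qed

lemma rank_le_dep:
  fixes A :: "complex^'n^'m"
  assumes "i3 \<noteq> i1" "i3 \<noteq> i2" "A $ i3 = A $ i1 + A $ i2"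
  shows "rank A \<le> CARD('m) - 1"
proof -
  define T where "T = (\<lambda>i. A $ i) ` (UNIV - {i3})"
  have rowA: "row i A = A $ i" for i unfolding row_def by (simp add: vec_eq_iff)
  have "rows A \<subseteq> vec.span T"
  proof
    fix v assume "v \<in> rows A"
    then obtain i where v: "v = A $ i" unfolding rows_def rowA by auto
    show "v \<in> vec.span T"
    proof (cases "i = i3")
      case True
      have "A $ i1 \<in> vec.span T" "A $ i2 \<in> vec.span T"
        using assms by (auto simp: T_def intro!: vec.span_base)
      then show ?thesis using True v assms(3) by (simp add: vec.span_add)
    next
      case False
      then show ?thesis using v by (auto simp: T_def intro!: vec.span_base)
    qed
  qed
  then have "vec.dim (rows A) \<le> card T" by (rule vec.dim_le_card) (simp add: T_def)
  also have "card T \<le> card (UNIV - {i3} :: 'm set)" unfolding T_def by (rule card_image_le) simp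
  also have "\<dots> = CARD('m) - 1" by (simp add: card_Diff_singleton)
  finally show ?thesis by (simp add: row_rank_def_gen)
qed

lemma full_rank_exists:
  assumes "CARD('m::finite) \<le> CARD('n::finite)"
  shows "\<exists>W :: complex^'n^'m. rank W \<ge> CARD('m)"
proof -
  obtain f :: "'m \<Rightarrow> 'n" where f: "inj f"
    using card_le_inj[of "UNIV::'m set" "UNIV::'n set"] assms by auto
  define W :: "complex^'n^'m" where "W = (\<chi> i. axis (f i) 1)"
  have rowW: "rows W = (\<lambda>i. axis (f i) 1) ` UNIV"
    unfolding rows_def row_def W_def by (auto simp: vec_eq_iff)
  have sub: "rows W \<subseteq> cart_basis" unfolding rowW cart_basis_def by auto
  have ind: "vec.independent (rows W)"
    by (rule vec.independent_mono[OF independent_cart_basis sub])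
  have inj: "inj (\<lambda>i. axis (f i) (1::complex))"
    using f by (auto simp: inj_def axis_eq_axis)
  have "card (rows W) = CARD('m)" unfolding rowW using inj by (simp add: card_image)
  moreover have "card (rows W) \<le> vec.dim (rows W)"
    by (rule vec.independent_card_le_dim[OF order_refl ind])
  ultimately show ?thesis by (auto simp: row_rank_def_gen)
qed

lemma three_idx:
  assumes "3 \<le> CARD('m)"
  obtains i1 i2 i3 :: "'m::finite" where "i1 \<noteq> i2" "i2 \<noteq> i3" "i1 \<noteq> i3"
proof -
  obtain S :: "'m set" where "card S = 3"
    using obtain_subset_with_card_n[OF assms] by blast
  then show ?thesis using that unfolding card_3_iff by blast
qed

lemma factor2:
  assumes "3 \<le> CARD('m::finite)"
  shows "\<exists>A B. rank A \<le> CARD('m) - 1 \<and> rank B \<le> CARD('m) - 1 \<and> (M::complex^'n^'m) = A \<star> B"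
proof -
  obtain i1 i2 i3 :: 'm where d: "i1 \<noteq> i2" "i2 \<noteq> i3" "i1 \<noteq> i3"
    using three_idx[OF assms] by blast
  have "\<forall>j. \<exists>q. fst q * fst (snd q) = M$i1$j \<and> fst (snd (snd q)) * snd (snd (snd q)) = M$i2$j
        \<and> (fst q + fst (snd (snd q))) * (fst (snd q) + snd (snd (snd q))) = M$i3$j"
    using col by fastforce
  then obtain q where q: "\<And>j. fst (q j) * fst (snd (q j)) = M$i1$j \<and> fst (snd (snd (q j))) * snd (snd (snd (q j))) = M$i2$j
        \<and> (fst (q j) + fst (snd (snd (q j)))) * (fst (snd (q j)) + snd (snd (snd (q j)))) = M$i3$j"
    by metis
  define a1 where "a1 j = fst (q j)" for j
  define b1 where "b1 j = fst (snd (q j))" for j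
  define a2 where "a2 j = fst (snd (snd (q j)))" for j
  define b2 where "b2 j = snd (snd (snd (q j)))" for j
  have e1: "a1 j * b1 j = M$i1$j" and e2: "a2 j * b2 j = M$i2$j"
    and e3: "(a1 j + a2 j) * (b1 j + b2 j) = M$i3$j" for j
    using q[of j] by (simp_all add: a1_def a2_def b1_def b2_def)
  define A :: "complex^'n^'m" where
    "A = (\<chi> i j. if i = i1 then a1 j else if i = i2 then a2 j else if i = i3 then a1 j + a2 j else M$i$j)"
  define B :: "complex^'n^'m" where
    "B = (\<chi> i j. if i = i1 then b1 j else if i = i2 then b2 j else if i = i3 then b1 j + b2 j else 1)"
  have "rank A \<le> CARD('m) - 1"
    by (rule rank_le_dep[of i3 i1 i2]) (use d in \<open>auto simp: A_def vec_eq_iff\<close>)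
  moreover have "rank B \<le> CARD('m) - 1"
    by (rule rank_le_dep[of i3 i1 i2]) (use d in \<open>auto simp: B_def vec_eq_iff\<close>)
  moreover have "M = A \<star> B"
    using d e1 e2 e3 by (auto simp: A_def B_def hadamard_def vec_eq_iff)
  ultimately show ?thesis by blast
qed

theorem proposition4p17:
  assumes "3 \<le> CARD('m::finite)" and "CARD('m) \<le> CARD('n::finite)"
  shows "Hrk_generic (CARD('m) - 1) TYPE('n) TYPE('m) = 2
       \<and> Hrk_max (CARD('m) - 1) TYPE('n) TYPE('m) = 2"
proof -
  define r where "r = CARD('m) - 1"
  obtain W :: "complex^'n^'m" where W: "rank W \<ge> CARD('m)"
    using full_rank_exists[OF assms(2)] by blast
  have Wr: "\<not> rank W \<le> r" using W assms(1) unfolding r_def by linarith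
  define P where "P M s \<longleftrightarrow> (\<exists>As. As \<noteq> [] \<and> length As = s \<and> (\<forall>A\<in>set As. rank A \<le> r)
                  \<and> (M::complex^'n^'m) = foldr (\<star>) (butlast As) (last As))" for M s
  have hrk: "Hrk r M = (LEAST s. P M s)" for M :: "complex^'n^'m" unfolding Hrk_def P_def ..
  have P2: "P M 2" for M :: "complex^'n^'m"
  proof -
    obtain A B where "rank A \<le> r" "rank B \<le> r" "M = A \<star> B"
      using factor2[OF assms(1)] unfolding r_def by blast
    then show ?thesis unfolding P_def by (intro exI[of _ "[A,B]"]) auto
  qed
  have le2: "Hrk r M \<le> 2" for M :: "complex^'n^'m" unfolding hrk by (rule Least_le[of "P M", OF P2])
  have ge2: "Hrk r W \<ge> 2"
  proof -
    have "P W (Hrk r W)" unfolding hrk by (rule LeastI[of "P W", OF P2])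
    then obtain As where As: "As \<noteq> []" "length As = Hrk r W" "\<forall>A\<in>set As. rank A \<le> r"
      "W = foldr (\<star>) (butlast As) (last As)" unfolding P_def by blast
    show ?thesis
    proof (rule ccontr)
      assume "\<not> 2 \<le> Hrk r W"
      with As(1,2) have "length As = 1" by (cases As) auto
      then obtain A where "As = [A]" by (cases As) auto
      with As(3,4) Wr show False by simp
    qed
  qed
  have max: "Hrk_max r TYPE('n) TYPE('m) = 2"
    unfolding Hrk_max_def
  proof (rule Max_eqI)
    show "finite (range (Hrk r :: complex^'n^'m \<Rightarrow> nat))"
      by (rule finite_subset[of _ "{..2}"]) (auto simp: le2)
    show "y \<le> 2" if "y \<in> range (Hrk r :: complex^'n^'m \<Rightarrow> nat)" for y using that le2 by auto
    show "2 \<in> range (Hrk r :: complex^'n^'m \<Rightarrow> nat)"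
      using le2[of W] ge2 by (intro image_eqI[of _ _ W]) auto
  qed
  have sub: "S \<subseteq> zariski_closure S" for S :: "(complex^'n^'m) set"
    unfolding zariski_closure_def by auto
  have h2: "hpow r 2 = (UNIV :: (complex^'n^'m) set)"
  proof -
    have "UNIV \<subseteq> {A \<star> B | A B. A \<in> Xr r \<and> B \<in> (Xr r :: (complex^'n^'m) set)}"
    proof
      fix M :: "complex^'n^'m"
      obtain A B where "rank A \<le> r" "rank B \<le> r" "M = A \<star> B"
        using factor2[OF assms(1)] unfolding r_def by blast
      then show "M \<in> {A \<star> B | A B. A \<in> Xr r \<and> B \<in> Xr r}" unfolding Xr_def by blast
    qed
    then show ?thesis using sub by (auto simp: numeral_2_eq_2 hstar_def)
  qed
  have h1: "hpow r 1 \<noteq> (UNIV :: (complex^'n^'m) set)"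
    using Wr by (auto simp: Xr_def)
  have gen: "Hrk_generic r TYPE('n) TYPE('m) = 2"
    unfolding Hrk_generic_def
  proof (rule Least_equality)
    show "1 \<le> (2::nat) \<and> hpow r 2 = (UNIV :: (complex^'n^'m) set)" using h2 by simp
    show "2 \<le> y" if "1 \<le> y \<and> hpow r y = (UNIV :: (complex^'n^'m) set)" for y
      using that h1 by (cases "y = 1") auto
  qed
  show ?thesis using gen max unfolding r_def by simp
qed

end
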